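(* Assume that for every $y\in\mathcal Y$ the map $u\mapsto\ell(y,u)$ is convex and $\rho$-Lipschitz continuous for some constant $\rho\in(0,\infty)$, and that for every $y\in\mathcal Y$ the map $u\mapsto s(y,u)$ is $\gamma$-Lipschitz continuous for some constant $\gamma\in(0,\infty)$. Then for every $y\in\mathcal Y$, $$|S_{\lambda;D^y}(X_i,Y_i)-\tilde S_{\lambda;D^y}(X_i,Y_i)|\le\tau^{(0)}_{\lambda;i}\ \ (1\le i\le n),\qquad |S_{\lambda;D^y}(X_{n+1},y)-\tilde S_{\lambda;D^y}(X_{n+1},y)|\le\tau^{(0)}_{\lambda;n+1},$$ where for every $i\in\{1,\dots,n+1\}$, $\tau^{(0)}_{\lambda;i}=\sqrt{K_{i,i}}\sqrt{K_{n+1,n+1}}\,\frac{\gamma\rho}{\lambda(n+1)}$.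
   Context: Let $\mathcal X\subset\mathbb R^d$, $\mathcal Y\subset\mathbb R$, $D=\{(X_1,Y_1),\dots,(X_n,Y_n)\}$ i.i.d. with distribution $P$ on $\mathcal X\times\mathcal Y$, and $(X_{n+1},Y_{n+1})\sim P$ independent of $D$. For $y\in\mathcal Y$, $D^y=D\cup\{(X_{n+1},y)\}$. Let $\mathcal H$ be a reproducing kernel Hilbert space of functions $\mathcal X\to\mathbb R$ with kernel $\kappa_{\mathcal H}$, norm $\|\cdot\|_{\mathcal H}$, and let $K=(\kappa_{\mathcal H}(X_i,X_j))_{1\le i,j\le n+1}$ be the Gram matrix, with diagonal entries $K_{i,i}=\kappa_{\mathcal H}(X_i,X_i)$. Let $\ell:\mathcal Y\times\mathcal Y\to\mathbb R$ be a loss and $\lambda>0$. For $y\in\mathcal Y$, $\hat f_{\lambda;D^y}$ denotes the minimizer over $f\in\mathcal H$ of $\frac{1}{n+1}\sum_{(x,y')\in D^y}\ell(y',f(x))+\lambda\|f\|_{\mathcal H}^2$. Given a non-conformity function $s:\mathcal Y\times\mathcal Y\to\mathbb R_+$, the scores are $S_{\lambda;D^y}(X_i,Y_i)=s(Y_i,\hat f_{\lambda;D^y}(X_i))$ for $i\le n$ and $S_{\lambda;D^y}(X_{n+1},y)=s(y,\hat f_{\lambda;D^y}(X_{n+1}))$. Fix $z\in\mathcal Y$; the approximate scores are $\tilde S_{\lambda;D^y}(X_i,Y_i)=s(Y_i,\hat f_{\lambda;D^z}(X_i))$ for $i\le n$ and $\tilde S_{\lambda;D^y}(X_{n+1},y)=s(y,\hat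 f_{\lambda;D^z}(X_{n+1}))$. *)

theory Defs
  imports "HOL-Analysis.Analysis"
begin

text \<open>The RKHS is modelled as an abstract real Hilbert space 'h together with the
  canonical feature map Phi (x |-> kappa(x,.)) on the input space; an element f of 'h
  is the function x |-> f \<bullet> Phi x (reproducing property), and the kernel is
  kappa x x' = Phi x \<bullet> Phi x'.  Density of the span of the feature vectors on the
  input set expresses that elements of H are determined by their values there.\<close>

definition is_rkhs_feature ::
  "'x set \<Rightarrow> ('x \<Rightarrow> 'x \<Rightarrow> real) \<Rightarrow> ('x \<Rightarrow> 'h::{real_inner,complete_space}) \<Rightarrow> bool" where
  "is_rkhs_feature XS kappa Phi \<longleftrightarrow>
     (\<forall>x\<in>XS. \<forall>x'\<in>XS. kappa x x' = inner (Phi x) (Phi x')) \<and>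
     closure (span (Phi ` XS)) = UNIV"

text \<open>Regularised empirical risk on the augmented data set D^y = D \<union> {(X_{n+1}, y)};
  data points are indexed 1..n+1, labels Yv 1..Yv n, candidate label y.\<close>

definition reg_risk ::
  "(real \<Rightarrow> real \<Rightarrow> real) \<Rightarrow> real \<Rightarrow> nat \<Rightarrow> (nat \<Rightarrow> 'x) \<Rightarrow> (nat \<Rightarrow> real)
    \<Rightarrow> ('x \<Rightarrow> 'h::real_inner) \<Rightarrow> real \<Rightarrow> 'h \<Rightarrow> real" where
  "reg_risk l lam n X Yv Phi y f =
     (1 / real (n + 1)) * ((\<Sum>i=1..n. l (Yv i) (inner f (Phi (X i))))
                           + l y (inner f (Phi (X (n + 1)))))
     + lam * (norm f)\<^sup>2"

definition is_minimizer :: "('h \<Rightarrow> real) \<Rightarrow> 'h \<Rightarrow> bool" where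
  "is_minimizer J f \<longleftrightarrow> (\<forall>g. J f \<le> J g)"

end

theory Submission
  imports Defs
begin


lemma eps_arg:
  fixes a b :: real
  assumes b: "b \<ge> 0" and h: "\<And>t. 0 < t \<Longrightarrow> t < 1 \<Longrightarrow> a \<ge> (1 - t) * b"
  shows "a \<ge> b"
proof (rule ccontr)
  assume "\<not> a \<ge> b"
  hence ab: "a < b" by simp
  hence bp: "b > 0" using b h[of "1/2"] by simp
  define t where "t = (b - a) / (2 * b)"
  have t0: "0 < t" using ab bp by (simp add: t_def)
  have "a \<ge> (1 - 1/2) * b" using h[of "1/2"] by simp
  hence t1: "t < 1" using ab bp by (simp add: t_def field_simps)
  have "(1 - t) * b = (a + b) / 2" using bp by (simp add: t_def field_simps)
  with h[OF t0 t1] ab show False by simp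
qed

lemma strong_min:
  fixes C :: "'h::real_inner \<Rightarrow> real"
  assumes lam: "lam > 0"
  and cvx: "\<And>f g t. 0 < t \<Longrightarrow> t < 1 \<Longrightarrow> C ((1-t) *\<^sub>R f + t *\<^sub>R g) \<le> (1-t) * C f + t * C g"
  and min: "\<And>g. C f + lam * (norm f)^2 \<le> C g + lam * (norm g)^2"
  shows "C g + lam*(norm g)^2 \<ge> C f + lam*(norm f)^2 + lam*(norm (g-f))^2"
proof -
  define d where "d = g - f"
  have gd: "g = f + d" by (simp add: d_def)
  have n2: "(norm g)^2 = (norm f)^2 + 2*(inner f d) + (norm d)^2"
    unfolding gd by (simp add: power2_norm_eq_inner inner_add_left inner_add_right inner_commute)
  have key: "C g + lam*(norm g)^2 - (C f + lam*(norm f)^2) \<ge> (1-t)*(lam*(norm d)^2)"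
    if t: "0<t" "t<1" for t
  proof -
    have e: "(1-t) *\<^sub>R f + t *\<^sub>R g = f + t *\<^sub>R d" by (simp add: d_def algebra_simps)
    have n1: "(norm (f + t *\<^sub>R d))^2 = (norm f)^2 + 2*t*(inner f d) + t^2*(norm d)^2"
    proof -
      have "(norm (f + t *\<^sub>R d))^2 = inner (f + t *\<^sub>R d) (f + t *\<^sub>R d)"
        by (simp add: power2_norm_eq_inner)
      also have "\<dots> = inner f f + 2*t*(inner f d) + t^2 * inner d d"
        by (simp add: inner_add_left inner_add_right inner_commute power2_eq_square algebra_simps)
      finally show ?thesis by (simp add: power2_norm_eq_inner)
    qed
    have "C f + lam*(norm f)^2 \<le> C (f + t*\<^sub>R d) + lam*(norm (f + t*\<^sub>R d))^2" by (rule min)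
    also have "\<dots> \<le> (1-t)*C f + t*C g + lam*((norm f)^2 + 2*t*(inner f d) + t^2*(norm d)^2)"
      using cvx[OF t, of f g] e n1 by simp
    finally have "0 \<le> t*((C g - C f) + lam*(2*(inner f d)) + lam*t*(norm d)^2)"
      by (simp add: algebra_simps power2_eq_square)
    hence "0 \<le> (C g - C f) + lam*(2*(inner f d)) + lam*t*(norm d)^2"
      using t by (simp add: zero_le_mult_iff)
    then show ?thesis using n2 by (simp add: algebra_simps)
  qed
  have "C g + lam*(norm g)^2 - (C f + lam*(norm f)^2) \<ge> lam*(norm d)^2"
    by (rule eps_arg) (use lam key in auto)
  then show ?thesis by (simp add: d_def)
qed

lemma risk_convex:
  fixes Phi :: "'x \<Rightarrow> 'h::real_inner"
  assumes cv: "\<forall>i\<in>{1..n}. convex_on UNIV (l (Yv i))" and cy: "convex_on UNIV (l y)"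
    and t: "0 < t" "t < 1"
  shows "(1 / real (n + 1)) * ((\<Sum>i=1..n. l (Yv i) (inner ((1-t) *\<^sub>R f + t *\<^sub>R g) (Phi (X i))))
                           + l y (inner ((1-t) *\<^sub>R f + t *\<^sub>R g) (Phi (X (n + 1)))))
    \<le> (1-t) * ((1 / real (n + 1)) * ((\<Sum>i=1..n. l (Yv i) (inner f (Phi (X i))))
                           + l y (inner f (Phi (X (n + 1))))))
      + t * ((1 / real (n + 1)) * ((\<Sum>i=1..n. l (Yv i) (inner g (Phi (X i))))
                           + l y (inner g (Phi (X (n + 1))))))"
proof -
  have one: "l a (inner ((1-t) *\<^sub>R f + t *\<^sub>R g) q) \<le> (1-t) * l a (inner f q) + t * l a (inner g q)"
    if "convex_on UNIV (l a)" for a q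
  proof -
    have "inner ((1-t) *\<^sub>R f + t *\<^sub>R g) q = (1-t) *\<^sub>R inner f q + t *\<^sub>R inner g q"
      by (simp add: inner_add_left)
    then show ?thesis using convex_onD[OF that, of t "inner f q" "inner g q"] t by simp
  qed
  have s: "(\<Sum>i=1..n. l (Yv i) (inner ((1-t) *\<^sub>R f + t *\<^sub>R g) (Phi (X i))))
      \<le> (\<Sum>i=1..n. (1-t) * l (Yv i) (inner f (Phi (X i))) + t * l (Yv i) (inner g (Phi (X i))))"
    by (rule sum_mono) (use cv one in auto)
  have s2: "(\<Sum>i=1..n. (1-t) * l (Yv i) (inner f (Phi (X i))) + t * l (Yv i) (inner g (Phi (X i))))
     = (1-t) * (\<Sum>i=1..n. l (Yv i) (inner f (Phi (X i)))) + t * (\<Sum>i=1..n. l (Yv i) (inner g (Phi (X i))))"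
    by (simp add: sum.distrib sum_distrib_left)
  have "(\<Sum>i=1..n. l (Yv i) (inner ((1-t) *\<^sub>R f + t *\<^sub>R g) (Phi (X i))))
        + l y (inner ((1-t) *\<^sub>R f + t *\<^sub>R g) (Phi (X (n + 1))))
     \<le> (1-t) * ((\<Sum>i=1..n. l (Yv i) (inner f (Phi (X i)))) + l y (inner f (Phi (X (n + 1)))))
       + t * ((\<Sum>i=1..n. l (Yv i) (inner g (Phi (X i)))) + l y (inner g (Phi (X (n + 1)))))"
    using add_mono[OF s one[OF cy, of "Phi (X (n+1))"]] unfolding s2 by (simp add: algebra_simps)
  note main = this
  show ?thesis
  proof -
    have aux: "c * A \<le> (1-t) * (c * B) + t * (c * C)" if "A \<le> (1-t)*B + t*C" "c \<ge> 0"
      for A B C c :: real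
    proof -
      have "c * A \<le> c * ((1-t)*B + t*C)" using that by (rule mult_left_mono)
      then show ?thesis by (simp add: algebra_simps)
    qed
    show ?thesis by (rule aux) (use main in auto)
  qed
qed

theorem theorem8:
  fixes XS :: "(real ^ 'd) set" and YS :: "real set"
    and n :: nat and X :: "nat \<Rightarrow> real ^ 'd" and Yv :: "nat \<Rightarrow> real"
    and kappa :: "real ^ 'd \<Rightarrow> real ^ 'd \<Rightarrow> real"
    and Phi :: "real ^ 'd \<Rightarrow> 'h::{real_inner,complete_space}"
    and l :: "real \<Rightarrow> real \<Rightarrow> real" and s :: "real \<Rightarrow> real \<Rightarrow> real"
    and lam rho gamma z :: real
    and fhat :: "real \<Rightarrow> 'h"
  assumes rkhs: "is_rkhs_feature XS kappa Phi"
    and X_in: "\<forall>i\<in>{1..n+1}. X i \<in> XS"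
    and Y_in: "\<forall>i\<in>{1..n}. Yv i \<in> YS"
    and lam_pos: "lam > 0"
    and rho_pos: "rho > 0" and gamma_pos: "gamma > 0"
    and l_convex: "\<forall>y\<in>YS. convex_on UNIV (l y)"
    and l_lip: "\<forall>y\<in>YS. rho-lipschitz_on UNIV (l y)"
    and s_nonneg: "\<forall>y\<in>YS. \<forall>u. s y u \<ge> 0"
    and s_lip: "\<forall>y\<in>YS. gamma-lipschitz_on UNIV (s y)"
    and z_in: "z \<in> YS"
    and fhat_min: "\<forall>y\<in>YS. is_minimizer (reg_risk l lam n X Yv Phi y) (fhat y)"
  shows "\<forall>y\<in>YS.
     (\<forall>i\<in>{1..n}.
        \<bar>s (Yv i) (inner (fhat y) (Phi (X i))) - s (Yv i) (inner (fhat z) (Phi (X i)))\<bar>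
          \<le> sqrt (kappa (X i) (X i)) * sqrt (kappa (X (n+1)) (X (n+1)))
             * (gamma * rho / (lam * real (n + 1)))) \<and>
     \<bar>s y (inner (fhat y) (Phi (X (n+1)))) - s y (inner (fhat z) (Phi (X (n+1))))\<bar>
          \<le> sqrt (kappa (X (n+1)) (X (n+1))) * sqrt (kappa (X (n+1)) (X (n+1)))
             * (gamma * rho / (lam * real (n + 1)))"
proof (rule ballI, rule conjI)
  fix y assume yY: "y \<in> YS"
  define N where "N = real (n + 1)"
  have Np: "N > 0" by (simp add: N_def)
  define p where "p = Phi (X (n+1))"
  define R where "R = (\<lambda>f. \<Sum>i=1..n. l (Yv i) (inner f (Phi (X i))))"
  have cv: "\<forall>i\<in>{1..n}. convex_on UNIV (l (Yv i))" using Y_in l_convex by auto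
  have J: "\<And>w f. reg_risk l lam n X Yv Phi w f = (1/N) * (R f + l w (inner f p)) + lam * (norm f)^2"
    by (simp add: reg_risk_def N_def R_def p_def)
  have sm: "(1/N) * (R g + l w (inner g p)) + lam*(norm g)^2 \<ge>
      (1/N) * (R (fhat w) + l w (inner (fhat w) p)) + lam*(norm (fhat w))^2 + lam*(norm (g - fhat w))^2"
    if wY: "w \<in> YS" for w g
  proof (rule strong_min[OF lam_pos, where C = "\<lambda>f. (1/N) * (R f + l w (inner f p))"])
    fix f g :: 'h and t :: real assume t: "0 < t" "t < 1"
    show "(1/N) * (R ((1-t) *\<^sub>R f + t *\<^sub>R g) + l w (inner ((1-t) *\<^sub>R f + t *\<^sub>R g) p))
      \<le> (1-t) * ((1/N) * (R f + l w (inner f p))) + t * ((1/N) * (R g + l w (inner g p)))"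
      using risk_convex[OF cv l_convex[rule_format, OF wY] t, where Phi=Phi and X=X and f=f and g=g]
      unfolding N_def R_def p_def by simp
  next
    fix g
    show "(1/N) * (R (fhat w) + l w (inner (fhat w) p)) + lam*(norm (fhat w))^2
      \<le> (1/N) * (R g + l w (inner g p)) + lam*(norm g)^2"
      using fhat_min wY unfolding is_minimizer_def J by blast
  qed
  define d where "d = fhat y - fhat z"
  have s1: "(1/N)*(R (fhat z) + l y (inner (fhat z) p)) + lam*(norm (fhat z))^2 \<ge>
     (1/N)*(R (fhat y) + l y (inner (fhat y) p)) + lam*(norm (fhat y))^2 + lam*(norm d)^2"
    using sm[OF yY, of "fhat z"] by (simp add: d_def norm_minus_commute)
  have s2: "(1/N)*(R (fhat y) + l z (inner (fhat y) p)) + lam*(norm (fhat y))^2 \<ge>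
     (1/N)*(R (fhat z) + l z (inner (fhat z) p)) + lam*(norm (fhat z))^2 + lam*(norm d)^2"
    using sm[OF z_in, of "fhat y"] by (simp add: d_def)
  have sum: "2*lam*(norm d)^2 \<le> (1/N)*((l y (inner (fhat z) p) - l y (inner (fhat y) p))
       + (l z (inner (fhat y) p) - l z (inner (fhat z) p)))"
    using s1 s2 by (simp add: algebra_simps)
  have ip: "\<bar>inner (fhat y) p - inner (fhat z) p\<bar> \<le> norm d * norm p"
    using Cauchy_Schwarz_ineq2[of d p] by (simp add: d_def inner_diff_left)
  have Lip: "w - v \<le> rho * \<bar>a - b\<bar>" if "w = l c a" "v = l c b" "c \<in> YS" for w v a b c
    using lipschitz_onD[OF l_lip[rule_format, OF that(3)], of a b] that
    by (simp add: dist_real_def abs_minus_commute)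
  have L1: "l y (inner (fhat z) p) - l y (inner (fhat y) p) \<le> rho * (norm d * norm p)"
    using Lip[OF refl refl yY, of "inner (fhat z) p" "inner (fhat y) p"] ip rho_pos
    by (smt (verit, ccfv_SIG) abs_minus_commute mult_left_mono)
  have L2: "l z (inner (fhat y) p) - l z (inner (fhat z) p) \<le> rho * (norm d * norm p)"
    using Lip[OF refl refl z_in, of "inner (fhat y) p" "inner (fhat z) p"] ip rho_pos
    by (smt (verit, ccfv_SIG) mult_left_mono)
  have "2*lam*(norm d)^2 \<le> (1/N)*(2*(rho * (norm d * norm p)))"
    using sum L1 L2 Np by (smt (verit) divide_pos_pos mult_left_mono)
  hence q: "lam*(norm d)*(norm d) \<le> (rho*norm p/N) * norm d" using Np by (simp add: power2_eq_square field_simps)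
  have dn: "norm d \<le> rho*norm p/(lam*N)"
  proof (cases "norm d = 0")
    case True then show ?thesis using rho_pos lam_pos Np by simp
  next
    case False
    hence "norm d > 0" by simp
    hence "lam * norm d \<le> rho*norm p/N" using mult_right_le_imp_le[OF q] by blast
    then show ?thesis using lam_pos Np by (simp add: field_simps)
  qed
  have kap: "sqrt (kappa (X i) (X i)) = norm (Phi (X i))" if "i \<in> {1..n+1}" for i
    using rkhs X_in that unfolding is_rkhs_feature_def by (simp add: norm_eq_sqrt_inner)
  have gen: "\<bar>s c (inner (fhat y) q) - s c (inner (fhat z) q)\<bar> \<le> norm q * norm p * (gamma * rho / (lam * N))"
    if cY: "c \<in> YS" for c q
  proof -
    have "\<bar>s c (inner (fhat y) q) - s c (inner (fhat z) q)\<bar> \<le> gamma * \<bar>inner (fhat y) q - inner (fhat z) q\<bar>"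
      using lipschitz_onD[OF s_lip[rule_format, OF cY], of "inner (fhat y) q" "inner (fhat z) q"]
      by (simp add: dist_real_def)
    also have "\<dots> \<le> gamma * (norm d * norm q)"
      using Cauchy_Schwarz_ineq2[of d q] gamma_pos by (simp add: d_def inner_diff_left)
    also have "\<dots> \<le> gamma * ((rho*norm p/(lam*N)) * norm q)"
      using mult_left_mono[OF mult_right_mono[OF dn norm_ge_zero[of q]], of gamma] gamma_pos by simp
    also have "\<dots> = norm q * norm p * (gamma * rho / (lam * N))" by simp
    finally show ?thesis .
  qed
  show "\<bar>s y (inner (fhat y) (Phi (X (n+1)))) - s y (inner (fhat z) (Phi (X (n+1))))\<bar>
          \<le> sqrt (kappa (X (n+1)) (X (n+1))) * sqrt (kappa (X (n+1)) (X (n+1)))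
             * (gamma * rho / (lam * real (n + 1)))"
    using gen[OF yY, of p] kap[of "n+1"] by (simp add: p_def N_def)
  show "\<forall>i\<in>{1..n}.
        \<bar>s (Yv i) (inner (fhat y) (Phi (X i))) - s (Yv i) (inner (fhat z) (Phi (X i)))\<bar>
          \<le> sqrt (kappa (X i) (X i)) * sqrt (kappa (X (n+1)) (X (n+1)))
             * (gamma * rho / (lam * real (n + 1)))"
  proof
    fix i assume i: "i \<in> {1..n}"
    then show "\<bar>s (Yv i) (inner (fhat y) (Phi (X i))) - s (Yv i) (inner (fhat z) (Phi (X i)))\<bar>
          \<le> sqrt (kappa (X i) (X i)) * sqrt (kappa (X (n+1)) (X (n+1)))
             * (gamma * rho / (lam * real (n + 1)))"
      using gen[of "Yv i" "Phi (X i)"] Y_in kap[of i] kap[of "n+1"] by (simp add: p_def N_def)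
  qed
qed

end
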